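(* Let $m\ge 2$, $n\ge1$ and $1\le u\le n$ be integers. Then $$\big(\dim\mathcal H_n^m\big)^{-2}\sum_{i=0}^{u-1}d_{\lambda_{n-i}}\;=\;1-\Big[\prod_{i=1}^{u}\frac{n-i+1}{n+m-i}\Big]^2 ,$$ where $d_{\lambda_k}$ is the dimension of $\lambda_k$ and $\dim\mathcal H_n^m=\binom{n+m-1}{n}$.
   Context: For $k\in\mathbb N$, $\lambda_k$ denotes the irreducible representation of $\mathrm{SU}(m)$ with Young diagram $(2k,k,\dots,k,0)$, i.e. first row of $2k$ boxes, rows $2,\dots,m-1$ of $k$ boxes each, and empty $m$-th row; $d_{\lambda_k}$ is its dimension. $\mathcal H_n^m$ is the space of $n$ bosons in $m$ modes, of dimension $\binom{n+m-1}{n}$. *)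

theory Defs
  imports Complex_Main
begin

definition young_lambda :: "nat \<Rightarrow> nat \<Rightarrow> nat \<Rightarrow> nat" where
  "young_lambda m k i = (if i = 0 then 2 * k else if i < m - 1 then k else 0)"

text \<open>Dimension of the irreducible SU(m) representation with highest weight given by
  the partition lam (rows lam 0 >= ... >= lam (m-1)), via the Weyl dimension formula.\<close>
definition weyl_dim :: "nat \<Rightarrow> (nat \<Rightarrow> nat) \<Rightarrow> real" where
  "weyl_dim m lam = (\<Prod>i<m. \<Prod>j\<in>{i<..<m}.
      (real (lam i) - real (lam j) + real j - real i) / (real j - real i))"

definition d_lambda :: "nat \<Rightarrow> nat \<Rightarrow> real" where
  "d_lambda m k = weyl_dim m (young_lambda m k)"

definition dim_bosons :: "nat \<Rightarrow> nat \<Rightarrow> nat" where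
  "dim_bosons n m = (n + m - 1) choose n"

end

theory Submission
  imports Defs
begin
lemma binprod: "(\<Prod>t<M. (real k + real (Suc t)) / real (Suc t)) = real ((k+M) choose M)"
proof (induction M)
  case 0 then show ?case by simp
next
  case (Suc M)
  have "real (Suc M) * real ((k + Suc M) choose Suc M) = real (k + Suc M) * real ((k+M) choose M)"
    using Suc_times_binomial[of M "k+M"] by (metis add_Suc_right of_nat_mult)
  then show ?case using Suc by (simp add: field_simps)
qed
lemma ins: "i < n \<Longrightarrow> {i<..<Suc n} = insert n {i<..<n}" by auto

lemma dl: assumes "m \<ge> 2" shows
  "d_lambda m k = real ((k+(m-2)) choose (m-2)) ^ 2 * (2*real k + real m - 1) / (real m - 1)"
proof -
  obtain M where m: "m = Suc (Suc M)" using assms by (metis add_2_eq_Suc le_Suc_ex)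
  let ?l = "young_lambda m k"
  let ?g = "\<lambda>i j. (real (?l i) - real (?l j) + real j - real i) / (real j - real i)"
  let ?c = "real ((k+M) choose M)"
  have "weyl_dim m ?l = (\<Prod>i<Suc (Suc M). \<Prod>j\<in>{i<..<Suc (Suc M)}. ?g i j)"
    unfolding weyl_dim_def m by simp
  also have "\<dots> = (\<Prod>j\<in>{0<..<Suc (Suc M)}. ?g 0 j) * (\<Prod>i<M. \<Prod>j\<in>{Suc i<..<Suc (Suc M)}. ?g (Suc i) j)"
  proof -
    have "(\<Prod>i<Suc (Suc M). \<Prod>j\<in>{i<..<Suc (Suc M)}. ?g i j) = (\<Prod>j\<in>{0<..<Suc (Suc M)}. ?g 0 j) * (\<Prod>i<Suc M. \<Prod>j\<in>{Suc i<..<Suc (Suc M)}. ?g (Suc i) j)"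
      by (rule prod.lessThan_Suc_shift)
    also have "(\<Prod>i<Suc M. \<Prod>j\<in>{Suc i<..<Suc (Suc M)}. ?g (Suc i) j) = (\<Prod>i<M. \<Prod>j\<in>{Suc i<..<Suc (Suc M)}. ?g (Suc i) j)"
    proof -
      have "{Suc M<..<Suc (Suc M)} = {}" by auto
      then show ?thesis by (simp only: prod.lessThan_Suc prod.empty mult_1_right)
    qed
    finally show ?thesis .
  qed
  also have "(\<Prod>j\<in>{0<..<Suc (Suc M)}. ?g 0 j) = ?c * ((2*real k + real M + 1)/(real M + 1))"
  proof -
    have h1: "(\<Prod>j\<in>{0<..<Suc (Suc M)}. ?g 0 j) = ?g 0 (Suc M) * (\<Prod>j\<in>{0<..<Suc M}. ?g 0 j)"
      by (simp only: ins[of 0 "Suc M"] zero_less_Suc prod.insert finite_greaterThanLessThan) simp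
    have h2: "{0<..<Suc M} = Suc ` {..<M}" by (auto simp: image_iff) (metis lessThan_iff less_Suc_eq_0_disj not_less_eq)
    have h3: "(\<Prod>j\<in>Suc ` {..<M}. ?g 0 j) = (\<Prod>t<M. (real k + real (Suc t)) / real (Suc t))"
      by (subst prod.reindex) (auto simp: m young_lambda_def intro!: prod.cong)
    have h4: "?g 0 (Suc M) = (2*real k + real M + 1)/(real M + 1)"
      by (simp add: m young_lambda_def add_ac)
    show ?thesis unfolding h1 h2 h3 h4 binprod by (simp only: mult.commute)
  qed
  also have "(\<Prod>i<M. \<Prod>j\<in>{Suc i<..<Suc (Suc M)}. ?g (Suc i) j) = (\<Prod>i<M. (real k + real (M - i)) / real (M - i))"
  proof (rule prod.cong[OF refl])
    fix i assume i: "i \<in> {..<M}"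
    have "(\<Prod>j\<in>{Suc i<..<Suc (Suc M)}. ?g (Suc i) j) = ?g (Suc i) (Suc M) * (\<Prod>j\<in>{Suc i<..<Suc M}. ?g (Suc i) j)"
      using i by (simp add: ins)
    moreover have "(\<Prod>j\<in>{Suc i<..<Suc M}. ?g (Suc i) j) = 1"
      by (rule prod.neutral) (auto simp: m young_lambda_def)
    moreover have "?g (Suc i) (Suc M) = (real k + real (M - i)) / real (M - i)"
      using i by (simp add: m young_lambda_def of_nat_diff)
    ultimately show "(\<Prod>j\<in>{Suc i<..<Suc (Suc M)}. ?g (Suc i) j) = (real k + real (M - i)) / real (M - i)" by simp
  qed
  also have "(\<Prod>i<M. (real k + real (M - i)) / real (M - i)) = ?c"
  proof -
    have "(\<Prod>i<M. (real k + real (M - i)) / real (M - i)) = (\<Prod>i<M. (\<lambda>t. (real k + real (Suc t)) / real (Suc t)) (M - Suc i))"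
      by (intro prod.cong) (auto simp: Suc_diff_Suc)
    also have "\<dots> = ?c" using prod.nat_diff_reindex[of "\<lambda>t. (real k + real (Suc t)) / real (Suc t)" M] binprod[of k M] by simp
    finally show ?thesis .
  qed
  finally show ?thesis unfolding d_lambda_def using m by (simp add: power2_eq_square algebra_simps)
qed

lemma symb: "(a + b) choose a = (a + b) choose b"
  by (metis add_diff_cancel_left' binomial_symmetric le_add1)

lemma E_rel: "real (Suc k + M choose M) * real (Suc k) = real (k + M + 1) * real (k + M choose M)"
proof -
  have "Suc k * (Suc (k + M) choose Suc k) = Suc (k + M) * ((k+M) choose k)" by (rule Suc_times_binomial)
  then have "Suc k * ((Suc k + M) choose M) = Suc (k + M) * ((k+M) choose M)"
    by (metis add_Suc symb)
  then show ?thesis by (metis of_nat_mult mult.commute Suc_eq_plus1 add_Suc)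
qed

lemma alg: fixes c1 E M k :: real assumes "M \<ge> 0" "E = c1 * k / (M + 1)"
  shows "c1 ^ 2 * (2 * k + M + 1) / (M + 1) = (c1 + E) ^ 2 - E ^ 2"
proof -
  have "M + 1 \<noteq> 0" using assms(1) by simp
  have "(c1 + E) ^ 2 - E ^ 2 = c1 * c1 + 2 * c1 * E" by (simp add: power2_eq_square algebra_simps)
  also have "\<dots> = c1 * c1 + 2 * c1 * c1 * k / (M + 1)" unfolding assms(2) by simp
  also have "\<dots> = c1 ^ 2 * (2 * k + M + 1) / (M + 1)" using \<open>M + 1 \<noteq> 0\<close>
    by (simp add: field_simps power2_eq_square)
  finally show ?thesis by simp
qed

lemma tel: "d_lambda (Suc (Suc M)) (Suc k) = real ((Suc k + M + 1) choose (M+1)) ^ 2 - real ((k + M + 1) choose (M+1)) ^ 2"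
proof -
  let ?c = "real ((k+M) choose M)"
  let ?c1 = "real ((Suc k+M) choose M)"
  let ?E = "real ((k + M + 1) choose (M+1))"
  have pas0: "((Suc k + M + 1) choose (M+1)) = ((Suc k + M) choose M) + ((k + M + 1) choose (M+1))"
    using binomial_Suc_Suc[of "Suc k + M" M] by simp
  have pas: "real ((Suc k + M + 1) choose (M+1)) = ?c1 + ?E"
    unfolding pas0 by (simp only: of_nat_add)
  have n1: "Suc M * (Suc (k+M) choose Suc M) = Suc (k+M) * ((k+M) choose M)" by (rule Suc_times_binomial)
  have n1': "(M+1) * ((k+M+1) choose (M+1)) = (k+M+1) * ((k+M) choose M)"
    using n1 by (simp only: Suc_eq_plus1)
  have e1: "?E * real (M+1) = real (k+M+1) * ?c"
    using arg_cong[OF n1', of real] by (simp only: of_nat_mult mult.commute)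
  have e2: "?c1 * real (Suc k) = real (k+M+1) * ?c" by (rule E_rel)
  have d: "d_lambda (Suc (Suc M)) (Suc k) = ?c1 ^ 2 * (2 * real (Suc k) + real M + 1) / (real M + 1)"
  proof -
    have "d_lambda (Suc (Suc M)) (Suc k) = real ((Suc k + M) choose M) ^ 2 * (2 * real (Suc k) + real (Suc (Suc M)) - 1) / (real (Suc (Suc M)) - 1)"
      using dl[of "Suc (Suc M)" "Suc k"] by simp
    also have "\<dots> = ?c1 ^ 2 * (2 * real (Suc k) + real M + 1) / (real M + 1)"
      by (simp only: of_nat_Suc) (simp add: algebra_simps)
    finally show ?thesis .
  qed
  have "?E * (real M + 1) = ?E * real (M+1)" by (simp only: of_nat_add of_nat_1)
  also have "\<dots> = real (k+M+1) * ?c" by (rule e1)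
  also have "\<dots> = ?c1 * real (Suc k)" by (rule e2[symmetric])
  finally have ee: "?E * (real M + 1) = ?c1 * real (Suc k)" .
  have E: "?E = ?c1 * real (Suc k) / (real M + 1)"
    using ee by (simp add: field_simps del: binomial_Suc_Suc)
  show ?thesis unfolding d pas by (rule alg[OF _ E]) simp
qed

lemma sumlem: "u \<le> n \<Longrightarrow> (\<Sum>i<u. d_lambda (Suc (Suc M)) (n - i)) = real ((n + M + 1) choose (M+1)) ^ 2 - real ((n - u + M + 1) choose (M+1)) ^ 2"
proof (induction u)
  case 0 then show ?case by simp
next
  case (Suc u)
  then obtain j where j: "n - u = Suc j" by (metis Suc_diff_Suc Suc_le_lessD)
  then have "n - Suc u = j" by simp
  with Suc j tel[of M j] show ?case by simp
qed

lemma E_rel2: "real (Suc j + M + 1 choose (M+1)) * real (Suc j) = real (Suc j + M + 1) * real (j + M + 1 choose (M+1))"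
proof -
  have "Suc j * (Suc (j + M + 1) choose Suc j) = Suc (j + M + 1) * ((j+M+1) choose j)" by (rule Suc_times_binomial)
  then have "Suc j * ((Suc j + (M + 1)) choose (M+1)) = Suc (j + M + 1) * ((j+(M+1)) choose (M+1))"
    by (metis add_Suc symb add.assoc)
  then show ?thesis by (metis of_nat_mult mult.commute add_Suc add.assoc)
qed

lemma prodlem: "u \<le> n \<Longrightarrow> real ((n + M + 1) choose (M+1)) * (\<Prod>i=1..u. real (n - i + 1) / real (n + Suc (Suc M) - i)) = real ((n - u + M + 1) choose (M+1))"
proof (induction u)
  case 0 then show ?case by simp
next
  case (Suc u)
  then obtain j where j: "n - u = Suc j" by (metis Suc_diff_Suc Suc_le_lessD)
  then have nj: "n - Suc u = j" by simp
  have f: "real (n - Suc u + 1) / real (n + Suc (Suc M) - Suc u) = real (Suc j) / real (Suc j + M + 1)"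
    using j nj Suc.prems by simp
  have "real ((n + M + 1) choose (M+1)) * (\<Prod>i=1..Suc u. real (n - i + 1) / real (n + Suc (Suc M) - i))
     = real ((n + M + 1) choose (M+1)) * (\<Prod>i=1..u. real (n - i + 1) / real (n + Suc (Suc M) - i)) * (real (Suc j) / real (Suc j + M + 1))"
    by (simp only: prod.nat_ivl_Suc'[of 1] mult.assoc f) simp
  also have "\<dots> = real (Suc j + M + 1 choose (M+1)) * real (Suc j) / real (Suc j + M + 1)"
    using Suc j by simp
  also have "\<dots> = real (j + M + 1 choose (M+1))" unfolding E_rel2 by simp
  finally show ?case using nj by simp
qed

lemma alg2: fixes E P :: real assumes "E > 0" shows "(E ^ 2 - (E * P) ^ 2) / E ^ 2 = 1 - P ^ 2"
  using assms by (simp add: field_simps power2_eq_square)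

theorem mainTheorem3:
  fixes m n u :: nat
  assumes "m \<ge> 2" and "n \<ge> 1" and "1 \<le> u" and "u \<le> n"
  shows "(\<Sum>i<u. d_lambda m (n - i)) / (real (dim_bosons n m))^2
         = 1 - (\<Prod>i=1..u. real (n - i + 1) / real (n + m - i))^2"
proof -
  obtain M where m: "m = Suc (Suc M)" using assms by (metis add_2_eq_Suc le_Suc_ex)
  have D: "dim_bosons n m = (n + M + 1) choose (M+1)"
    unfolding dim_bosons_def m using symb[of n "M+1"] by (simp add: add_ac)
  let ?E = "real ((n + M + 1) choose (M+1))"
  let ?P = "\<Prod>i=1..u. real (n - i + 1) / real (n + m - i)"
  have pos: "?E > 0" by (rule of_nat_0_less_iff[THEN iffD2], rule zero_less_binomial) simp
  have S: "(\<Sum>i<u. d_lambda m (n - i)) = ?E ^ 2 - (?E * ?P) ^ 2"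
    using sumlem[OF assms(4), of M] prodlem[OF assms(4), of M] m by simp
  show ?thesis unfolding S D by (rule alg2[OF pos])
qed
end
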